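(* Let $\mathcal T\in\mathbb R^{I_1\times\cdots\times I_N}$ and let $R\le\min_n I_n$. On tuples $(\mathbf X^{(1)},\dots,\mathbf X^{(N)})$ with $\mathbf X^{(n)}\in\mathbb R^{I_n\times R}$ of full column rank define $$\mathcal L(\mathbf X^{(1)},\dots,\mathbf X^{(N)})=\sum_{r=1}^R\sum_{i_1,\dots,i_N}t_{i_1\dots i_N}x^{(1)}_{i_1r}\cdots x^{(N)}_{i_Nr}-\tfrac12\sum_{n=1}^N\log\det\big(\mathbf X^{(n)T}\mathbf X^{(n)}\big).$$ Then the tuple is a critical point of $\mathcal L$ if and only if $\mathbf T_{(n)}\big(\bigodot_{m\ne n}\mathbf X^{(m)}\big)=\mathbf X^{(n)}(\mathbf X^{(n)T}\mathbf X^{(n)})^{-1}$ for every $n$. Moreover, at any critical point: (i) for every $i\in\{1,\dots,N\}$ and every $r\in\{1,\dots,R\}$, the vector $\mathbf w\in\mathbb R^{I_i}$ with entries $w_{a}=\sum_{i_j,\,j\ne i}t_{i_1\dots i_{i-1}\,a\,i_{i+1}\dots i_N}\prod_{j\ne i}x^{(j)}_{i_j r}$ lies in the column span of $\mathbf X^{(i)}$; (ii) the tensor $\mathcal Z$ with entries $z_{j_1\dots j_N}=\sum_{i_1,\dots,i_N}t_{i_1\dots i_N}x^{(1)}_{i_1j_1}\cdots x^{(N)}_{i_Nj_N}$ satisfies, for every $p\in\{1,\dots,N\}$ and all $r,s\in\{1,\dots,R\}$, $z_{j_1\dots j_N}=\delta_{rs}$ whenever $j_m=r$ for all $m\ne p$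 and $j_p=s$; (iii) with $\mathcal Y=[\![\mathbf X^{(1)},\dots,\mathbf X^{(N)}]\!]$, for each $i$ the $I_i\times I_i$ matrix $\mathbf T_{(i)}\mathbf Y_{(i)}^T$, with entries $\sum_{i_j,\,j\ne i}t_{\dots a\dots}\,y_{\dots b\dots}$ (index $a$, resp. $b$, in mode $i$ and all other indices summed), equals $\mathbf X^{(i)}\mathbf X^{(i)\dagger}$, the orthogonal projector onto the column space of $\mathbf X^{(i)}$.
   Context: $[\![\mathbf B^{(1)},\dots,\mathbf B^{(N)}]\!]$ denotes the tensor with entries $\sum_{r=1}^R\prod_{m}b^{(m)}_{i_m r}$. For matrices $\mathbf C^{(m)}\in\mathbb R^{I_m\times R}$ ($m\ne n$), $\mathbf T_{(n)}\big(\bigodot_{m\ne n}\mathbf C^{(m)}\big)$ denotes the $I_n\times R$ matrix with entries $\sum_{i_m,\,m\ne n}t_{i_1\dots i_N}\prod_{m\ne n}c^{(m)}_{i_m r}$. $\mathbf M^\dagger$ is the Moore–Penrose pseudoinverse; $\delta_{rs}$ is the Kronecker delta. *)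

theory Defs
  imports "Jordan_Normal_Form.Determinant"
begin

text \<open>Index tuples of an order-N tensor with mode sizes I 0, ..., I (N-1):
  functions i :: nat => nat with i n < I n for n < N, normalised to 0 beyond N.
  Factor matrices: X n a r is the (a,r) entry of X^(n) (0-based indices).\<close>

definition idx :: "nat \<Rightarrow> (nat \<Rightarrow> nat) \<Rightarrow> (nat \<Rightarrow> nat) set" where
  "idx N I = {i. (\<forall>n<N. i n < I n) \<and> (\<forall>n. N \<le> n \<longrightarrow> i n = 0)}"

definition Xmat :: "(nat \<Rightarrow> nat) \<Rightarrow> nat \<Rightarrow> (nat \<Rightarrow> nat \<Rightarrow> nat \<Rightarrow> real) \<Rightarrow> nat \<Rightarrow> real mat" where
  "Xmat I R X n = mat (I n) R (\<lambda>(a, r). X n a r)"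

definition full_col_rank :: "real mat \<Rightarrow> bool" where
  "full_col_rank A \<longleftrightarrow> (\<forall>v \<in> carrier_vec (dim_col A). A *\<^sub>v v = 0\<^sub>v (dim_row A) \<longrightarrow> v = 0\<^sub>v (dim_col A))"

definition mat_inv :: "real mat \<Rightarrow> real mat" where
  "mat_inv A = (THE B. B \<in> carrier_mat (dim_row A) (dim_row A) \<and>
      A * B = 1\<^sub>m (dim_row A) \<and> B * A = 1\<^sub>m (dim_row A))"

definition pinv :: "real mat \<Rightarrow> real mat" where
  "pinv A = (THE B. B \<in> carrier_mat (dim_col A) (dim_row A) \<and>
      A * B * A = A \<and> B * A * B = B \<and>
      transpose_mat (A * B) = A * B \<and> transpose_mat (B * A) = B * A)"

definition Lfun :: "nat \<Rightarrow> (nat \<Rightarrow> nat) \<Rightarrow> nat \<Rightarrow> ((nat \<Rightarrow> nat) \<Rightarrow> real)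
    \<Rightarrow> (nat \<Rightarrow> nat \<Rightarrow> nat \<Rightarrow> real) \<Rightarrow> real" where
  "Lfun N I R T X =
     (\<Sum>r<R. \<Sum>i\<in>idx N I. T i * (\<Prod>m<N. X m (i m) r))
     - 1/2 * (\<Sum>n<N. ln (det (transpose_mat (Xmat I R X n) * Xmat I R X n)))"

definition is_critical :: "nat \<Rightarrow> (nat \<Rightarrow> nat) \<Rightarrow> nat \<Rightarrow> ((nat \<Rightarrow> nat) \<Rightarrow> real)
    \<Rightarrow> (nat \<Rightarrow> nat \<Rightarrow> nat \<Rightarrow> real) \<Rightarrow> bool" where
  "is_critical N I R T X \<longleftrightarrow>
     (\<forall>n<N. \<forall>a<I n. \<forall>r<R.
        ((\<lambda>s. Lfun N I R T (X(n := (X n)(a := (X n a)(r := s))))) has_real_derivative 0)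
          (at (X n a r)))"

text \<open>Entry (a,r) of T_(n) (Khatri-Rao product of X^(m), m ~= n).\<close>
definition unf_prod :: "nat \<Rightarrow> (nat \<Rightarrow> nat) \<Rightarrow> ((nat \<Rightarrow> nat) \<Rightarrow> real)
    \<Rightarrow> (nat \<Rightarrow> nat \<Rightarrow> nat \<Rightarrow> real) \<Rightarrow> nat \<Rightarrow> nat \<Rightarrow> nat \<Rightarrow> real" where
  "unf_prod N I T X n a r =
     (\<Sum>i\<in>{i\<in>idx N I. i n = a}. T i * (\<Prod>m\<in>{..<N} - {n}. X m (i m) r))"

definition Zten :: "nat \<Rightarrow> (nat \<Rightarrow> nat) \<Rightarrow> ((nat \<Rightarrow> nat) \<Rightarrow> real)
    \<Rightarrow> (nat \<Rightarrow> nat \<Rightarrow> nat \<Rightarrow> real) \<Rightarrow> (nat \<Rightarrow> nat) \<Rightarrow> real" where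
  "Zten N I T X j = (\<Sum>i\<in>idx N I. T i * (\<Prod>m<N. X m (i m) (j m)))"

definition Yten :: "nat \<Rightarrow> nat \<Rightarrow> (nat \<Rightarrow> nat \<Rightarrow> nat \<Rightarrow> real) \<Rightarrow> (nat \<Rightarrow> nat) \<Rightarrow> real" where
  "Yten N R X i = (\<Sum>r<R. \<Prod>m<N. X m (i m) r)"

text \<open>Entry (a,b) of T_(n) Y_(n)^T.\<close>
definition TY :: "nat \<Rightarrow> (nat \<Rightarrow> nat) \<Rightarrow> nat \<Rightarrow> ((nat \<Rightarrow> nat) \<Rightarrow> real)
    \<Rightarrow> (nat \<Rightarrow> nat \<Rightarrow> nat \<Rightarrow> real) \<Rightarrow> nat \<Rightarrow> nat \<Rightarrow> nat \<Rightarrow> real" where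
  "TY N I R T X n a b = (\<Sum>i\<in>{i\<in>idx N I. i n = a}. T i * Yten N R X (i(n := b)))"

end

theory Submission
  imports Defs
begin


lemma cofactor_row_indep:
  assumes "A \<in> carrier_mat k k" "B \<in> carrier_mat k k" "j < k"
    and "\<And>i l. i < k \<Longrightarrow> l < k \<Longrightarrow> i \<noteq> j \<Longrightarrow> B $$ (i,l) = A $$ (i,l)"
  shows "cofactor B j l = cofactor A j l"
proof -
  have "mat_delete B j l = mat_delete A j l"
    using assms by (auto simp: mat_delete_def intro!: eq_matI)
  thus ?thesis by (simp add: cofactor_def)
qed

lemma det_deriv:
  fixes A :: "real \<Rightarrow> real mat"
  assumes car: "\<And>t. A t \<in> carrier_mat k k"
    and d: "\<And>i j. i<k \<Longrightarrow> j<k \<Longrightarrow> ((\<lambda>t. A t $$ (i,j)) has_real_derivative D i j) (at t0)"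
  shows "((\<lambda>t. det (A t)) has_real_derivative (\<Sum>i<k. \<Sum>j<k. D i j * cofactor (A t0) i j)) (at t0)"
proof -
  let ?P = "{p. p permutes {0..<k}}"
  have eq: "(\<lambda>t. det (A t)) = (\<lambda>t. \<Sum>p\<in>?P. signof p * (\<Prod>i\<in>{0..<k}. A t $$ (i, p i)))"
  proof (rule ext) fix t show "det (A t) = (\<Sum>p\<in>?P. signof p * (\<Prod>i\<in>{0..<k}. A t $$ (i, p i)))" using car[of t] by (simp add: det_def) qed
  have "((\<lambda>t. \<Sum>p\<in>?P. signof p * (\<Prod>i\<in>{0..<k}. A t $$ (i, p i))) has_real_derivative
     (\<Sum>p\<in>?P. signof p * (\<Sum>j\<in>{0..<k}. D j (p j) * (\<Prod>i\<in>{0..<k}-{j}. A t0 $$ (i, p i))))) (at t0)"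
  proof (rule DERIV_sum, rule DERIV_cmult, rule has_field_derivative_prod)
    fix p j assume p: "p \<in> ?P" and j: "j \<in> {0..<k}"
    have "p j < k" using p j permutes_in_image[of p "{0..<k}" j] by auto
    thus "((\<lambda>t. A t $$ (j, p j)) has_real_derivative D j (p j)) (at t0)" using d j by auto
  qed
  also have "(\<Sum>p\<in>?P. signof p * (\<Sum>j\<in>{0..<k}. D j (p j) * (\<Prod>i\<in>{0..<k}-{j}. A t0 $$ (i, p i))))
     = (\<Sum>j<k. \<Sum>l<k. D j l * cofactor (A t0) j l)"
  proof -
    have "(\<Sum>p\<in>?P. signof p * (\<Sum>j\<in>{0..<k}. D j (p j) * (\<Prod>i\<in>{0..<k}-{j}. A t0 $$ (i, p i))))
       = (\<Sum>j\<in>{0..<k}. \<Sum>p\<in>?P. signof p * (D j (p j) * (\<Prod>i\<in>{0..<k}-{j}. A t0 $$ (i, p i))))"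
      by (simp add: sum_distrib_left sum.swap[of _ ?P])
    also have "\<dots> = (\<Sum>j<k. \<Sum>l<k. D j l * cofactor (A t0) j l)"
    proof (rule sum.cong)
      show "{0..<k} = {..<k}" by auto
      fix j assume j: "j \<in> {..<k}"
      define B where "B = mat k k (\<lambda>(i,l). if i = j then D j l else A t0 $$ (i,l))"
      have Bc: "B \<in> carrier_mat k k" by (simp add: B_def)
      have "det B = (\<Sum>p\<in>?P. signof p * (\<Prod>i\<in>{0..<k}. B $$ (i, p i)))"
        using Bc by (simp add: det_def)
      also have "\<dots> = (\<Sum>p\<in>?P. signof p * (D j (p j) * (\<Prod>i\<in>{0..<k}-{j}. A t0 $$ (i, p i))))"
      proof (rule sum.cong[OF refl])
        fix p assume p: "p \<in> ?P"
        have pi: "\<And>i. i < k \<Longrightarrow> p i < k" using p permutes_in_image[of p "{0..<k}"] by auto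
        have "(\<Prod>i\<in>{0..<k}. B $$ (i, p i)) = B $$ (j, p j) * (\<Prod>i\<in>{0..<k}-{j}. B $$ (i, p i))"
          using j by (simp add: prod.remove)
        also have "\<dots> = D j (p j) * (\<Prod>i\<in>{0..<k}-{j}. A t0 $$ (i, p i))"
          using j pi by (auto simp: B_def intro!: prod.cong)
        finally show "signof p * (\<Prod>i\<in>{0..<k}. B $$ (i, p i)) = signof p * (D j (p j) * (\<Prod>i\<in>{0..<k}-{j}. A t0 $$ (i, p i)))" by simp
      qed
      finally have 1: "det B = \<dots>" .
      have "det B = (\<Sum>l<k. B $$ (j,l) * cofactor B j l)"
        using laplace_expansion_row[OF Bc, of j] j by auto
      also have "\<dots> = (\<Sum>l<k. D j l * cofactor (A t0) j l)"
        by (rule sum.cong[OF refl], subst cofactor_row_indep[OF car[of t0] Bc], insert j, auto simp: B_def)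
      finally show "(\<Sum>p\<in>?P. signof p * (D j (p j) * (\<Prod>i\<in>{0..<k}-{j}. A t0 $$ (i, p i)))) = \<dots>"
        using 1 by simp
    qed
    finally show ?thesis .
  qed
  finally show ?thesis unfolding eq .
qed



lemma mat_inv_eq:
  assumes A: "A \<in> carrier_mat k k" and B: "B \<in> carrier_mat k k"
    and AB: "A * B = 1\<^sub>m k" and BA: "B * A = 1\<^sub>m k"
  shows "mat_inv A = B"
  unfolding mat_inv_def
proof (rule the_equality)
  show "B \<in> carrier_mat (dim_row A) (dim_row A) \<and> A * B = 1\<^sub>m (dim_row A) \<and> B * A = 1\<^sub>m (dim_row A)"
    using A B AB BA by auto
  fix C assume C: "C \<in> carrier_mat (dim_row A) (dim_row A) \<and> A * C = 1\<^sub>m (dim_row A) \<and> C * A = 1\<^sub>m (dim_row A)"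
  hence Cc: "C \<in> carrier_mat k k" and CA: "C * A = 1\<^sub>m k" using A by auto
  have "C = C * (A * B)" using Cc AB by simp
  also have "\<dots> = (C * A) * B" using Cc A B by simp
  also have "\<dots> = B" using CA B by simp
  finally show "C = B" .
qed

lemma inv_exists:
  fixes A :: "real mat"
  assumes A: "A \<in> carrier_mat k k" and d: "det A \<noteq> 0"
  shows "A * ((1 / det A) \<cdot>\<^sub>m adj_mat A) = 1\<^sub>m k" "((1 / det A) \<cdot>\<^sub>m adj_mat A) * A = 1\<^sub>m k"
    "(1 / det A) \<cdot>\<^sub>m adj_mat A \<in> carrier_mat k k"
proof -
  have ad: "adj_mat A \<in> carrier_mat k k" using adj_mat(1)[OF A] .
  have "A * ((1 / det A) \<cdot>\<^sub>m adj_mat A) = (1 / det A) \<cdot>\<^sub>m (A * adj_mat A)"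
    using mult_smult_distrib[OF A ad] .
  also have "\<dots> = 1\<^sub>m k" using adj_mat(2)[OF A] d by (auto intro!: eq_matI)
  finally show "A * ((1 / det A) \<cdot>\<^sub>m adj_mat A) = 1\<^sub>m k" .
  have "((1 / det A) \<cdot>\<^sub>m adj_mat A) * A = (1 / det A) \<cdot>\<^sub>m (adj_mat A * A)"
    using mult_smult_assoc_mat[OF ad A] .
  also have "\<dots> = 1\<^sub>m k" using adj_mat(3)[OF A] d by (auto intro!: eq_matI)
  finally show "((1 / det A) \<cdot>\<^sub>m adj_mat A) * A = 1\<^sub>m k" .
  show "(1 / det A) \<cdot>\<^sub>m adj_mat A \<in> carrier_mat k k" using ad by simp
qed

lemma gram_entry:
  assumes "Xm \<in> carrier_mat m k" "i < k" "j < k"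
  shows "(transpose_mat Xm * Xm) $$ (i,j) = (\<Sum>b<m. Xm $$ (b,i) * Xm $$ (b,j))"
  using assms by (auto simp: scalar_prod_def atLeast0LessThan intro!: sum.cong)

lemma quad_gram:
  fixes Xm :: "real mat"
  assumes X: "Xm \<in> carrier_mat m k"
  shows "(\<Sum>i<k. v i * (\<Sum>j<k. (transpose_mat Xm * Xm) $$ (i,j) * v j))
       = (\<Sum>b<m. (\<Sum>i<k. Xm $$ (b,i) * v i)^2)"
proof -
  have "(\<Sum>i<k. v i * (\<Sum>j<k. (transpose_mat Xm * Xm) $$ (i,j) * v j))
      = (\<Sum>i<k. \<Sum>j<k. \<Sum>b<m. (Xm $$ (b,i) * v i) * (Xm $$ (b,j) * v j))"
  proof (intro sum.cong refl)
    fix i assume i: "i \<in> {..<k}"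
    have "v i * (\<Sum>j<k. (transpose_mat Xm * Xm) $$ (i,j) * v j) = (\<Sum>j<k. v i * ((transpose_mat Xm * Xm) $$ (i,j) * v j))"
      by (simp add: sum_distrib_left)
    also have "\<dots> = (\<Sum>j<k. \<Sum>b<m. (Xm $$ (b,i) * v i) * (Xm $$ (b,j) * v j))"
    proof (intro sum.cong refl)
      fix j assume j: "j \<in> {..<k}"
      show "v i * ((transpose_mat Xm * Xm) $$ (i,j) * v j) = (\<Sum>b<m. (Xm $$ (b,i) * v i) * (Xm $$ (b,j) * v j))"
        unfolding gram_entry[OF X i[simplified] j[simplified]] by (simp add: sum_distrib_left sum_distrib_right mult_ac)
    qed
    finally show "v i * (\<Sum>j<k. (transpose_mat Xm * Xm) $$ (i,j) * v j) = (\<Sum>j<k. \<Sum>b<m. (Xm $$ (b,i) * v i) * (Xm $$ (b,j) * v j))" .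
  qed
  also have "\<dots> = (\<Sum>b<m. \<Sum>i<k. \<Sum>j<k. (Xm $$ (b,i) * v i) * (Xm $$ (b,j) * v j))"
    by (subst sum.swap, rule sum.cong[OF refl], subst sum.swap, simp)
  also have "\<dots> = (\<Sum>b<m. (\<Sum>i<k. Xm $$ (b,i) * v i)^2)"
    by (simp add: power2_eq_square sum_product)
  finally show ?thesis .
qed

lemma gram_det_pos:
  fixes Xm :: "real mat"
  assumes X: "Xm \<in> carrier_mat m k" and fr: "full_col_rank Xm"
  shows "det (transpose_mat Xm * Xm) > 0"
proof -
  define G where "G = transpose_mat Xm * Xm"
  have Gc: "G \<in> carrier_mat k k" using X by (simp add: G_def)
  define M where "M t = mat k k (\<lambda>(i,j). (1-t)*(if i=j then 1 else 0) + t * G $$ (i,j))" for t :: real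
  have Mc: "M t \<in> carrier_mat k k" for t by (simp add: M_def)
  have M0: "M 0 = 1\<^sub>m k" by (auto simp: M_def intro!: eq_matI)
  have M1: "M 1 = G" using Gc by (auto simp: M_def intro!: eq_matI)
  have cont: "isCont (\<lambda>t. det (M t)) t" for t
  proof -
    have "((\<lambda>t. det (M t)) has_real_derivative (\<Sum>i<k. \<Sum>j<k. (G $$ (i,j) - (if i=j then 1 else 0)) * cofactor (M t) i j)) (at t)"
    proof (rule det_deriv[OF Mc])
      fix i j assume ij: "i < k" "j < k"
      have e: "(\<lambda>t. M t $$ (i,j)) = (\<lambda>t. (1-t)*(if i=j then 1 else 0) + t * G $$ (i,j))"
        using ij by (simp add: M_def)
      show "((\<lambda>t. M t $$ (i,j)) has_real_derivative (G $$ (i,j) - (if i=j then 1 else 0))) (at t)"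
        unfolding e by (auto intro!: derivative_eq_intros)
    qed
    thus ?thesis by (rule DERIV_isCont)
  qed
  have nz: "det (M t) \<noteq> 0" if t: "0 \<le> t" "t \<le> 1" for t
  proof
    assume "det (M t) = 0"
    then obtain v where v: "v \<in> carrier_vec k" "v \<noteq> 0\<^sub>v k" "M t *\<^sub>v v = 0\<^sub>v k"
      using det_0_iff_vec_prod_zero[OF Mc] by blast
    have eqi: "(1-t) * v $ i + t * (\<Sum>j<k. G $$ (i,j) * v $ j) = 0" if i: "i < k" for i
    proof -
      have "(M t *\<^sub>v v) $ i = 0" using v(3) i by simp
      hence "(\<Sum>j<k. ((1-t)*(if i=j then 1 else 0) + t * G $$ (i,j)) * v $ j) = 0"
        using i v(1) by (simp add: M_def scalar_prod_def atLeast0LessThan)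
      moreover have "(\<Sum>j<k. ((1-t)*(if i=j then 1 else 0) + t * G $$ (i,j)) * v $ j)
          = (\<Sum>j<k. (1-t)*(if i=j then v $ j else 0) + t * (G $$ (i,j) * v $ j))"
        by (rule sum.cong) (auto simp: algebra_simps)
      also have "\<dots> = (\<Sum>j<k. (1-t)*(if i=j then v $ j else 0)) + t * (\<Sum>j<k. G $$ (i,j) * v $ j)"
        by (simp add: sum.distrib sum_distrib_left)
      moreover have "(\<Sum>j<k. (1-t)*(if i=j then v $ j else 0)) = (1-t) * v $ i"
        using i by (simp add: sum_distrib_left[symmetric])
      ultimately show ?thesis by simp
    qed
    have z: "(\<Sum>i<k. v $ i * ((1-t) * v $ i + t * (\<Sum>j<k. G $$ (i,j) * v $ j))) = 0"
      using eqi by simp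
    have "(\<Sum>i<k. v $ i * ((1-t) * v $ i + t * (\<Sum>j<k. G $$ (i,j) * v $ j)))
       = (\<Sum>i<k. (1-t) * (v $ i)^2 + t * (v $ i * (\<Sum>j<k. G $$ (i,j) * v $ j)))"
      by (rule sum.cong) (auto simp: algebra_simps power2_eq_square)
    also have "\<dots> = (1-t) * (\<Sum>i<k. (v $ i)^2) + t * (\<Sum>i<k. v $ i * (\<Sum>j<k. G $$ (i,j) * v $ j))"
      by (simp add: sum.distrib sum_distrib_left)
    finally have "(1-t) * (\<Sum>i<k. (v $ i)^2) + t * (\<Sum>i<k. v $ i * (\<Sum>j<k. G $$ (i,j) * v $ j)) = 0"
      using z by simp
    hence E: "(1-t) * (\<Sum>i<k. (v $ i)^2) + t * (\<Sum>b<m. (\<Sum>i<k. Xm $$ (b,i) * v $ i)^2) = 0"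
      using quad_gram[OF X, of "\<lambda>i. v $ i"] by (simp add: G_def)
    have S1: "(\<Sum>i<k. (v $ i)^2) \<ge> 0" by (simp add: sum_nonneg)
    have S2: "(\<Sum>b<m. (\<Sum>i<k. Xm $$ (b,i) * v $ i)^2) \<ge> 0" by (simp add: sum_nonneg)
    show False
    proof (cases "t = 0")
      case True
      hence "(\<Sum>i<k. (v $ i)^2) = 0" using E by simp
      hence "\<forall>i\<in>{..<k}. (v $ i)^2 = 0" by (subst (asm) sum_nonneg_eq_0_iff) auto
      hence "v = 0\<^sub>v k" using v(1) by (auto intro!: eq_vecI)
      thus False using v(2) by simp
    next
      case False
      hence tp: "t > 0" using t by simp
      have "t * (\<Sum>b<m. (\<Sum>i<k. Xm $$ (b,i) * v $ i)^2) = 0"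
        using E S1 S2 t by (smt (verit) mult_nonneg_nonneg)
      hence "(\<Sum>b<m. (\<Sum>i<k. Xm $$ (b,i) * v $ i)^2) = 0" using tp by simp
      hence "\<forall>b\<in>{..<m}. (\<Sum>i<k. Xm $$ (b,i) * v $ i)^2 = 0" by (subst (asm) sum_nonneg_eq_0_iff) auto
      hence "Xm *\<^sub>v v = 0\<^sub>v m" using X v(1)
        by (auto intro!: eq_vecI simp: scalar_prod_def atLeast0LessThan)
      hence "v = 0\<^sub>v k" using fr X v(1) unfolding full_col_rank_def by auto
      thus False using v(2) by simp
    qed
  qed
  show ?thesis
  proof (rule ccontr)
    assume "\<not> ?thesis"
    hence "det (M 1) \<le> 0" using M1 by (simp add: G_def)
    moreover have "0 \<le> det (M 0)" using M0 by simp
    ultimately obtain t where "0 \<le> t" "t \<le> 1" "det (M t) = 0"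
      using IVT2[of "\<lambda>t. det (M t)" 1 0 0] cont by auto
    thus False using nz by auto
  qed
qed

lemma gram_facts:
  fixes Xm :: "real mat"
  assumes X: "Xm \<in> carrier_mat m k" and fr: "full_col_rank Xm"
  defines "G \<equiv> transpose_mat Xm * Xm"
  defines "H \<equiv> mat_inv G"
  shows "G \<in> carrier_mat k k" "H \<in> carrier_mat k k" "G * H = 1\<^sub>m k" "H * G = 1\<^sub>m k"
    "transpose_mat H = H" "transpose_mat G = G" "det G > 0"
    "\<And>i j. i < k \<Longrightarrow> j < k \<Longrightarrow> cofactor G i j = det G * H $$ (j,i)"
    "pinv Xm = H * transpose_mat Xm"
proof -
  show Gc: "G \<in> carrier_mat k k" using X by (simp add: G_def)
  show dp: "det G > 0" using gram_det_pos[OF X fr] by (simp add: G_def)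
  have Hd: "H = (1 / det G) \<cdot>\<^sub>m adj_mat G"
    unfolding H_def by (rule mat_inv_eq[OF Gc], insert inv_exists[OF Gc] dp, auto)
  show Hc: "H \<in> carrier_mat k k" "G * H = 1\<^sub>m k" "H * G = 1\<^sub>m k"
    unfolding Hd using inv_exists[OF Gc] dp by auto
  have XT: "transpose_mat Xm \<in> carrier_mat k m" using X by simp
  show GT: "transpose_mat G = G" unfolding G_def using transpose_mult[OF XT X] by simp
  have "mat_inv G = transpose_mat H"
  proof (rule mat_inv_eq[OF Gc])
    show "transpose_mat H \<in> carrier_mat k k" using Hc by simp
    have "G * transpose_mat H = transpose_mat (H * G)"
      using transpose_mult[OF Hc(1) Gc] GT by simp
    thus "G * transpose_mat H = 1\<^sub>m k" using Hc by simp
    have "transpose_mat H * G = transpose_mat (G * H)"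
      using transpose_mult[OF Gc Hc(1)] GT by simp
    thus "transpose_mat H * G = 1\<^sub>m k" using Hc by simp
  qed
  thus HT: "transpose_mat H = H" unfolding H_def by simp
  show "\<And>i j. i < k \<Longrightarrow> j < k \<Longrightarrow> cofactor G i j = det G * H $$ (j,i)"
    using Gc dp unfolding Hd by (auto simp: adj_mat_def)
  define B0 where "B0 = H * transpose_mat Xm"
  have B0c: "B0 \<in> carrier_mat k m" using Hc XT by (simp add: B0_def)
  have c1: "Xm * B0 * Xm = Xm"
  proof -
    have "Xm * B0 * Xm = Xm * (B0 * Xm)" using assoc_mult_mat[OF X B0c X] .
    also have "B0 * Xm = H * G" unfolding B0_def G_def using assoc_mult_mat[OF Hc(1) XT X] .
    finally have "Xm * B0 * Xm = Xm * (H * G)" .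
    thus ?thesis using Hc X by simp
  qed
  have c2: "B0 * Xm * B0 = B0"
  proof -
    have "B0 * Xm = H * G" unfolding B0_def G_def using assoc_mult_mat[OF Hc(1) XT X] .
    hence "B0 * Xm * B0 = (H * G) * (H * transpose_mat Xm)" by (simp add: B0_def)
    thus ?thesis using Hc XT by (simp add: B0_def)
  qed
  have c3: "transpose_mat (Xm * B0) = Xm * B0"
  proof -
    have "transpose_mat (Xm * B0) = transpose_mat B0 * transpose_mat Xm"
      using transpose_mult[OF X B0c] .
    also have "transpose_mat B0 = Xm * transpose_mat H"
      using transpose_mult[OF Hc(1) XT] by (simp add: B0_def)
    finally have "transpose_mat (Xm * B0) = Xm * H * transpose_mat Xm" using HT by simp
    thus ?thesis using assoc_mult_mat[OF X Hc(1) XT] by (simp add: B0_def)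
  qed
  have c4: "transpose_mat (B0 * Xm) = B0 * Xm"
  proof -
    have "B0 * Xm = H * G" unfolding B0_def G_def using assoc_mult_mat[OF Hc(1) XT X] .
    thus ?thesis using Hc by simp
  qed
  show "pinv Xm = H * transpose_mat Xm"
    unfolding pinv_def B0_def[symmetric]
  proof (rule the_equality)
    show "B0 \<in> carrier_mat (dim_col Xm) (dim_row Xm) \<and> Xm * B0 * Xm = Xm \<and> B0 * Xm * B0 = B0 \<and>
      transpose_mat (Xm * B0) = Xm * B0 \<and> transpose_mat (B0 * Xm) = B0 * Xm"
      using B0c c1 c2 c3 c4 X by auto
    fix B assume "B \<in> carrier_mat (dim_col Xm) (dim_row Xm) \<and> Xm * B * Xm = Xm \<and> B * Xm * B = B \<and>
      transpose_mat (Xm * B) = Xm * B \<and> transpose_mat (B * Xm) = B * Xm"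
    hence Bc: "B \<in> carrier_mat k m" and b1: "Xm * B * Xm = Xm" and b3: "transpose_mat (Xm * B) = Xm * B"
      using X by auto
    have BT: "transpose_mat B \<in> carrier_mat m k" using Bc by simp
    have "B = (H * G) * B" using Hc Bc by simp
    also have "\<dots> = H * (G * B)" using assoc_mult_mat[OF Hc(1) Gc Bc] .
    also have "G * B = transpose_mat Xm * (Xm * B)" unfolding G_def using assoc_mult_mat[OF XT X Bc] .
    also have "Xm * B = transpose_mat B * transpose_mat Xm"
      using b3 transpose_mult[OF X Bc] by simp
    also have "transpose_mat Xm * (transpose_mat B * transpose_mat Xm) = transpose_mat (Xm * B * Xm)"
    proof -
      have XB: "Xm * B \<in> carrier_mat m m" using X Bc by simp
      have "transpose_mat (Xm * B * Xm) = transpose_mat Xm * transpose_mat (Xm * B)"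
        using transpose_mult[OF XB X] .
      also have "transpose_mat (Xm * B) = transpose_mat B * transpose_mat Xm" using transpose_mult[OF X Bc] .
      finally show ?thesis by simp
    qed
    also have "\<dots> = transpose_mat Xm" using b1 by simp
    finally show "B = B0" by (simp add: B0_def)
  qed
qed

lemma lndet_deriv:
  fixes Y :: "nat \<Rightarrow> nat \<Rightarrow> real"
  assumes a: "a < m" and r: "r < k" and fr: "full_col_rank (mat m k (\<lambda>(b,c). Y b c))"
  shows "((\<lambda>s. ln (det (transpose_mat (mat m k (\<lambda>(b,c). if b = a \<and> c = r then s else Y b c))
              * mat m k (\<lambda>(b,c). if b = a \<and> c = r then s else Y b c))))
     has_real_derivative 2 * (mat m k (\<lambda>(b,c). Y b c) * mat_inv (transpose_mat (mat m k (\<lambda>(b,c). Y b c)) * mat m k (\<lambda>(b,c). Y b c))) $$ (a,r))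
     (at (Y a r))"
proof -
  define Xm where "Xm = mat m k (\<lambda>(b,c). Y b c)"
  define Xs where "Xs s = mat m k (\<lambda>(b,c). if b = a \<and> c = r then s else Y b c)" for s
  define G where "G = transpose_mat Xm * Xm"
  define H where "H = mat_inv G"
  have Xc: "Xm \<in> carrier_mat m k" by (simp add: Xm_def)
  note gf = gram_facts[OF Xc fr[folded Xm_def], folded G_def, folded H_def]
  have Xs0: "Xs (Y a r) = Xm" by (auto simp: Xs_def Xm_def intro!: eq_matI)
  have Xsc: "Xs s \<in> carrier_mat m k" for s by (simp add: Xs_def)
  define x where "x s b i = (if b = a \<and> i = r then s else Y b i)" for s :: real and b i
  define dx where "dx b i = (if b = a \<and> i = r then 1 else 0 :: real)" for b i
  have xd: "((\<lambda>s. x s b i) has_real_derivative dx b i) (at t)" for b i t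
    by (cases "b = a \<and> i = r") (auto simp: x_def dx_def intro!: derivative_eq_intros)
  define D where "D i j = (\<Sum>b<m. dx b i * x (Y a r) b j + x (Y a r) b i * dx b j)" for i j
  have detd: "((\<lambda>s. det (transpose_mat (Xs s) * Xs s)) has_real_derivative
      (\<Sum>i<k. \<Sum>j<k. D i j * cofactor (transpose_mat (Xs (Y a r)) * Xs (Y a r)) i j)) (at (Y a r))"
  proof (rule det_deriv)
    show "transpose_mat (Xs t) * Xs t \<in> carrier_mat k k" for t using Xsc[of t] by simp
    fix i j assume ij: "i < k" "j < k"
    have e: "(\<lambda>s. (transpose_mat (Xs s) * Xs s) $$ (i,j)) = (\<lambda>s. \<Sum>b<m. x s b i * x s b j)"
    proof
      fix s show "(transpose_mat (Xs s) * Xs s) $$ (i,j) = (\<Sum>b<m. x s b i * x s b j)"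
        using gram_entry[OF Xsc ij] ij by (simp add: Xs_def x_def)
    qed
    show "((\<lambda>s. (transpose_mat (Xs s) * Xs s) $$ (i,j)) has_real_derivative D i j) (at (Y a r))"
      unfolding e D_def
    proof (rule DERIV_sum)
      fix b
      show "((\<lambda>s. x s b i * x s b j) has_real_derivative dx b i * x (Y a r) b j + x (Y a r) b i * dx b j) (at (Y a r))"
        using DERIV_mult[OF xd[of b i] xd[of b j]] by (simp add: mult_ac)
    qed
  qed
  have Dij: "D i j = (if i = r then Y a j else 0) + (if j = r then Y a i else 0)" for i j
  proof -
    have "D i j = (\<Sum>b<m. (if b = a then (if i = r then Y a j else 0) + (if j = r then Y a i else 0) else 0))"
      unfolding D_def by (rule sum.cong) (auto simp: dx_def x_def)
    also have "\<dots> = (if i = r then Y a j else 0) + (if j = r then Y a i else 0)"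
      using a by (simp add: sum.delta)
    finally show ?thesis .
  qed
  have U: "(Xm * H) $$ (a,r) = (\<Sum>j<k. Y a j * H $$ (j,r))"
    using a r gf(2) Xc by (simp add: Xm_def scalar_prod_def atLeast0LessThan)
  have Hs: "H $$ (r,i) = H $$ (i,r)" if "i < k" for i
  proof -
    have "transpose_mat H $$ (i,r) = H $$ (r,i)" using gf(2) that r by simp
    thus ?thesis using gf(5) by simp
  qed
  have "(\<Sum>i<k. \<Sum>j<k. D i j * cofactor G i j) = det G * (\<Sum>i<k. \<Sum>j<k. D i j * H $$ (j,i))"
    using gf(8) by (simp add: sum_distrib_left mult_ac)
  also have "(\<Sum>i<k. \<Sum>j<k. D i j * H $$ (j,i)) = 
       (\<Sum>i<k. \<Sum>j<k. (if i = r then Y a j * H $$ (j,i) else 0)) + (\<Sum>i<k. \<Sum>j<k. (if j = r then Y a i * H $$ (j,i) else 0))" (is "_ = ?rhs")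
  proof -
    have "(\<Sum>i<k. \<Sum>j<k. D i j * H $$ (j,i)) = (\<Sum>i<k. \<Sum>j<k. (if i = r then Y a j * H $$ (j,i) else 0) + (if j = r then Y a i * H $$ (j,i) else 0))"
      unfolding Dij by (intro sum.cong refl) (auto simp: distrib_right)
    also have "\<dots> = (\<Sum>i<k. (\<Sum>j<k. (if i = r then Y a j * H $$ (j,i) else 0)) + (\<Sum>j<k. (if j = r then Y a i * H $$ (j,i) else 0)))"
      by (simp only: sum.distrib)
    also have "\<dots> = ?rhs" by (simp only: sum.distrib)
    finally show ?thesis .
  qed
  also have "\<dots> = (\<Sum>j<k. Y a j * H $$ (j,r)) + (\<Sum>i<k. Y a i * H $$ (r,i))"
  proof -
    have ifs: "\<And>P f. (\<Sum>j<k. if P then f j else 0) = (if P then (\<Sum>j<k. f j) else (0::real))" by auto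
    show ?thesis using r by (simp add: sum.delta ifs)
  qed
  also have "(\<Sum>i<k. Y a i * H $$ (r,i)) = (\<Sum>j<k. Y a j * H $$ (j,r))"
    using Hs by (intro sum.cong) auto
  finally have S: "(\<Sum>i<k. \<Sum>j<k. D i j * cofactor G i j) = det G * (2 * (Xm * H) $$ (a,r))"
    using U by simp
  have "((\<lambda>s. ln (det (transpose_mat (Xs s) * Xs s))) has_real_derivative
        inverse (det G) * (\<Sum>i<k. \<Sum>j<k. D i j * cofactor G i j)) (at (Y a r))"
  proof -
    have lnd: "DERIV ln (det (transpose_mat (Xs (Y a r)) * Xs (Y a r))) :> inverse (det G)"
      using DERIV_ln[of "det G"] gf(7) Xs0 by (simp add: G_def)
    show ?thesis using DERIV_chain2[OF lnd detd] Xs0 by (simp add: G_def)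
  qed
  hence "((\<lambda>s. ln (det (transpose_mat (Xs s) * Xs s))) has_real_derivative 2 * (Xm * H) $$ (a,r)) (at (Y a r))"
    using S gf(7) by (simp add: field_simps)
  thus ?thesis by (simp add: Xs_def Xm_def H_def G_def)
qed



lemma finite_idx: "finite (idx N I)"
proof -
  have "idx N I \<subseteq> (\<lambda>f n. if n < N then f n else 0) ` (PiE {..<N} (\<lambda>n. {..<I n}))"
  proof
    fix i assume i: "i \<in> idx N I"
    have "restrict i {..<N} \<in> PiE {..<N} (\<lambda>n. {..<I n})" using i by (auto simp: idx_def)
    moreover have "i = (\<lambda>n. if n < N then restrict i {..<N} n else 0)"
      using i by (auto simp: idx_def)
    ultimately show "i \<in> (\<lambda>f n. if n < N then f n else 0) ` (PiE {..<N} (\<lambda>n. {..<I n}))" by blast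
  qed
  thus ?thesis by (rule finite_subset) (auto intro: finite_PiE)
qed

lemma L_deriv:
  assumes n: "n < N" and a: "a < I n" and r: "r < R"
    and rank: "\<forall>n<N. full_col_rank (Xmat I R X n)"
  shows "((\<lambda>s. Lfun N I R T (X(n := (X n)(a := (X n a)(r := s))))) has_real_derivative
     unf_prod N I T X n a r - (Xmat I R X n * mat_inv (transpose_mat (Xmat I R X n) * Xmat I R X n)) $$ (a,r))
     (at (X n a r))"
proof -
  define X' where "X' s = X(n := (X n)(a := (X n a)(r := s)))" for s
  define U where "U = (Xmat I R X n * mat_inv (transpose_mat (Xmat I R X n) * Xmat I R X n)) $$ (a,r)"
  have X'n: "X' s n b c = (if b = a \<and> c = r then s else X n b c)" for s b c by (simp add: X'_def)
  have X'm: "m \<noteq> n \<Longrightarrow> X' s m = X m" for s m by (simp add: X'_def)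
  define P where "P i r' = (\<Prod>m\<in>{..<N}-{n}. X m (i m) r')" for i r'
  have F1: "((\<lambda>s. \<Sum>r'<R. \<Sum>i\<in>idx N I. T i * (\<Prod>m<N. X' s m (i m) r')) has_real_derivative
      (\<Sum>r'<R. \<Sum>i\<in>idx N I. (if i n = a \<and> r' = r then T i * P i r' else 0))) (at (X n a r))"
  proof (intro DERIV_sum)
    fix r' i
    have e: "(\<lambda>s. T i * (\<Prod>m<N. X' s m (i m) r')) = (\<lambda>s. T i * ((if i n = a \<and> r' = r then s else X n (i n) r') * P i r'))"
    proof
      fix s
      have "(\<Prod>m<N. X' s m (i m) r') = X' s n (i n) r' * (\<Prod>m\<in>{..<N}-{n}. X' s m (i m) r')"
        using n by (simp add: prod.remove)
      also have "(\<Prod>m\<in>{..<N}-{n}. X' s m (i m) r') = P i r'" unfolding P_def by (rule prod.cong) (auto simp: X'm)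
      finally show "T i * (\<Prod>m<N. X' s m (i m) r') = T i * ((if i n = a \<and> r' = r then s else X n (i n) r') * P i r')"
        by (simp add: X'n)
    qed
    show "((\<lambda>s. T i * (\<Prod>m<N. X' s m (i m) r')) has_real_derivative (if i n = a \<and> r' = r then T i * P i r' else 0)) (at (X n a r))"
      unfolding e by (cases "i n = a \<and> r' = r") (auto intro!: derivative_eq_intros)
  qed
  have F1v: "(\<Sum>r'<R. \<Sum>i\<in>idx N I. (if i n = a \<and> r' = r then T i * P i r' else 0)) = unf_prod N I T X n a r"
  proof -
    have "(\<Sum>r'<R. \<Sum>i\<in>idx N I. (if i n = a \<and> r' = r then T i * P i r' else 0))
        = (\<Sum>r'<R. if r' = r then (\<Sum>i\<in>idx N I. (if i n = a then T i * P i r else 0)) else 0)"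
      by (intro sum.cong refl) auto
    also have "\<dots> = (\<Sum>i\<in>idx N I. (if i n = a then T i * P i r else 0))" using r by (simp add: sum.delta)
    also have "\<dots> = unf_prod N I T X n a r"
      unfolding unf_prod_def P_def by (simp add: sum.inter_filter[OF finite_idx])
    finally show ?thesis .
  qed
  have F2: "((\<lambda>s. \<Sum>n'<N. ln (det (transpose_mat (Xmat I R (X' s) n') * Xmat I R (X' s) n'))) has_real_derivative
      (\<Sum>n'<N. if n' = n then 2 * U else 0)) (at (X n a r))"
  proof (intro DERIV_sum)
    fix n'
    show "((\<lambda>s. ln (det (transpose_mat (Xmat I R (X' s) n') * Xmat I R (X' s) n'))) has_real_derivative
      (if n' = n then 2 * U else 0)) (at (X n a r))"
    proof (cases "n' = n")
      case True
      have e: "Xmat I R (X' s) n = mat (I n) R (\<lambda>(b,c). if b = a \<and> c = r then s else X n b c)" for s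
        by (simp add: Xmat_def X'n)
      have fr: "full_col_rank (mat (I n) R (\<lambda>(b,c). X n b c))" using rank n by (simp add: Xmat_def)
      show ?thesis using lndet_deriv[OF a r fr] by (simp add: True U_def Xmat_def X'n)
    next
      case False
      hence "\<And>s. Xmat I R (X' s) n' = Xmat I R X n'" by (simp add: Xmat_def X'm[OF False])
      thus ?thesis using False by simp
    qed
  qed
  have "((\<lambda>s. Lfun N I R T (X' s)) has_real_derivative unf_prod N I T X n a r - 1/2 * (2 * U)) (at (X n a r))"
  proof -
    have "(\<lambda>s. Lfun N I R T (X' s)) = (\<lambda>s. (\<Sum>r'<R. \<Sum>i\<in>idx N I. T i * (\<Prod>m<N. X' s m (i m) r'))
        - 1/2 * (\<Sum>n'<N. ln (det (transpose_mat (Xmat I R (X' s) n') * Xmat I R (X' s) n'))))"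
      by (simp add: Lfun_def)
    moreover have "(\<Sum>n'<N. if n' = n then 2 * U else 0) = 2 * U" using n by simp
    ultimately show ?thesis using DERIV_diff[OF F1 DERIV_cmult[OF F2, of "1/2"]] F1v by simp
  qed
  thus ?thesis by (simp add: X'_def U_def)
qed



theorem mainTheorem6:
  fixes N R :: nat and I :: "nat \<Rightarrow> nat"
    and T :: "(nat \<Rightarrow> nat) \<Rightarrow> real"
    and X :: "nat \<Rightarrow> nat \<Rightarrow> nat \<Rightarrow> real"
  assumes N: "1 \<le> N"
    and R: "\<forall>n<N. R \<le> I n"
    and rank: "\<forall>n<N. full_col_rank (Xmat I R X n)"
  shows "(is_critical N I R T X \<longleftrightarrow>
           (\<forall>n<N. mat (I n) R (\<lambda>(a, r). unf_prod N I T X n a r) =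
                   Xmat I R X n * mat_inv (transpose_mat (Xmat I R X n) * Xmat I R X n)))
    \<and> (is_critical N I R T X \<longrightarrow>
         (\<forall>i<N. \<forall>r<R. \<exists>c \<in> carrier_vec R.
             vec (I i) (\<lambda>a. unf_prod N I T X i a r) = Xmat I R X i *\<^sub>v c)
       \<and> (\<forall>p<N. \<forall>r<R. \<forall>s<R.
             Zten N I T X (\<lambda>m. if m = p then s else if m < N then r else 0)
               = (if r = s then 1 else 0))
       \<and> (\<forall>i<N. mat (I i) (I i) (\<lambda>(a, b). TY N I R T X i a b)
               = Xmat I R X i * pinv (Xmat I R X i)))"
proof -
  define Xm where "Xm n = Xmat I R X n" for n
  define H where "H n = mat_inv (transpose_mat (Xm n) * Xm n)" for n
  define U where "U n = Xm n * H n" for n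
  have Xc: "Xm n \<in> carrier_mat (I n) R" for n by (simp add: Xm_def Xmat_def)
  have Xe: "a < I n \<Longrightarrow> r < R \<Longrightarrow> Xm n $$ (a,r) = X n a r" for n a r by (simp add: Xm_def Xmat_def)
  have gf: "n < N \<Longrightarrow> transpose_mat (Xm n) * Xm n \<in> carrier_mat R R \<and> H n \<in> carrier_mat R R \<and>
     (transpose_mat (Xm n) * Xm n) * H n = 1\<^sub>m R \<and> pinv (Xm n) = H n * transpose_mat (Xm n)" for n
    using gram_facts[OF Xc, of n] rank by (auto simp: H_def Xm_def)
  have Hc: "n < N \<Longrightarrow> H n \<in> carrier_mat R R" for n using gf by auto
  have Uc: "n < N \<Longrightarrow> U n \<in> carrier_mat (I n) R" for n unfolding U_def by (rule mult_carrier_mat[OF Xc Hc])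
  have crit: "is_critical N I R T X \<longleftrightarrow> (\<forall>n<N. \<forall>a<I n. \<forall>r<R. unf_prod N I T X n a r = U n $$ (a,r))"
  proof
    assume c: "is_critical N I R T X"
    show "\<forall>n<N. \<forall>a<I n. \<forall>r<R. unf_prod N I T X n a r = U n $$ (a,r)"
    proof (intro allI impI)
      fix n a r assume "n < N" "a < I n" "r < R"
      note d = L_deriv[OF this rank, of T]
      have d0: "((\<lambda>s. Lfun N I R T (X(n := (X n)(a := (X n a)(r := s))))) has_real_derivative 0) (at (X n a r))"
        using c \<open>n < N\<close> \<open>a < I n\<close> \<open>r < R\<close> unfolding is_critical_def by blast
      have "unf_prod N I T X n a r - U n $$ (a,r) = 0"
        using DERIV_unique[OF d d0] by (simp add: U_def H_def Xm_def)
      thus "unf_prod N I T X n a r = U n $$ (a,r)" by simp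
    qed
  next
    assume e: "\<forall>n<N. \<forall>a<I n. \<forall>r<R. unf_prod N I T X n a r = U n $$ (a,r)"
    show "is_critical N I R T X" unfolding is_critical_def
    proof (intro allI impI)
      fix n a r assume "n < N" "a < I n" "r < R"
      note d = L_deriv[OF this rank, of T]
      thus "((\<lambda>s. Lfun N I R T (X(n := (X n)(a := (X n a)(r := s))))) has_real_derivative 0) (at (X n a r))"
        using e \<open>n < N\<close> \<open>a < I n\<close> \<open>r < R\<close> by (simp add: U_def H_def Xm_def)
    qed
  qed
  have meq: "(mat (I n) R (\<lambda>(a, r). unf_prod N I T X n a r) = U n) \<longleftrightarrow> (\<forall>a<I n. \<forall>r<R. unf_prod N I T X n a r = U n $$ (a,r))"
    if n: "n < N" for n
  proof
    assume "mat (I n) R (\<lambda>(a, r). unf_prod N I T X n a r) = U n"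
    hence "\<forall>a<I n. \<forall>r<R. mat (I n) R (\<lambda>(a, r). unf_prod N I T X n a r) $$ (a,r) = U n $$ (a,r)" by simp
    thus "\<forall>a<I n. \<forall>r<R. unf_prod N I T X n a r = U n $$ (a,r)" by simp
  next
    assume "\<forall>a<I n. \<forall>r<R. unf_prod N I T X n a r = U n $$ (a,r)"
    thus "mat (I n) R (\<lambda>(a, r). unf_prod N I T X n a r) = U n" using Uc[OF n] by (auto intro!: eq_matI)
  qed
  have part0: "is_critical N I R T X \<longleftrightarrow>
           (\<forall>n<N. mat (I n) R (\<lambda>(a, r). unf_prod N I T X n a r) =
                   Xmat I R X n * mat_inv (transpose_mat (Xmat I R X n) * Xmat I R X n))"
    using crit meq by (auto simp: U_def H_def Xm_def)
  have rest: "(\<forall>i<N. \<forall>r<R. \<exists>c \<in> carrier_vec R.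
             vec (I i) (\<lambda>a. unf_prod N I T X i a r) = Xmat I R X i *\<^sub>v c)
       \<and> (\<forall>p<N. \<forall>r<R. \<forall>s<R.
             Zten N I T X (\<lambda>m. if m = p then s else if m < N then r else 0)
               = (if r = s then 1 else 0))
       \<and> (\<forall>i<N. mat (I i) (I i) (\<lambda>(a, b). TY N I R T X i a b)
               = Xmat I R X i * pinv (Xmat I R X i))" if c: "is_critical N I R T X"
  proof (intro conjI allI impI)
    have Ue: "\<And>n a r. n < N \<Longrightarrow> a < I n \<Longrightarrow> r < R \<Longrightarrow> unf_prod N I T X n a r = U n $$ (a,r)"
      using crit c by auto
    fix i r assume i: "i < N" and r: "r < R"
    show "\<exists>c \<in> carrier_vec R. vec (I i) (\<lambda>a. unf_prod N I T X i a r) = Xmat I R X i *\<^sub>v c"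
    proof (rule bexI[of _ "col (H i) r"])
      show "col (H i) r \<in> carrier_vec R" using Hc[OF i] unfolding carrier_vec_def carrier_mat_def by simp
      have "Xm i *\<^sub>v col (H i) r = col (U i) r" unfolding U_def by (rule col_mult2[OF Xc Hc[OF i] r, symmetric])
      also have "\<dots> = vec (I i) (\<lambda>a. U i $$ (a,r))"
        using Uc[OF i] r by (intro eq_vecI) auto
      also have "\<dots> = vec (I i) (\<lambda>a. unf_prod N I T X i a r)"
        using Ue[OF i _ r] by (intro eq_vecI) auto
      finally show "vec (I i) (\<lambda>a. unf_prod N I T X i a r) = Xmat I R X i *\<^sub>v col (H i) r"
        unfolding Xm_def by simp
    qed
  next
    have Ue: "\<And>n a r. n < N \<Longrightarrow> a < I n \<Longrightarrow> r < R \<Longrightarrow> unf_prod N I T X n a r = U n $$ (a,r)"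
      using crit c by auto
    fix p r s assume p: "p < N" and r: "r < R" and s: "s < R"
    define j where "j = (\<lambda>m. if m = p then s else if m < N then r else (0::nat))"
    have "Zten N I T X j = (\<Sum>ii\<in>idx N I. \<Sum>a<I p. if ii p = a then T ii * (X p a s * (\<Prod>m\<in>{..<N}-{p}. X m (ii m) r)) else 0)"
      unfolding Zten_def
    proof (rule sum.cong[OF refl])
      fix ii assume ii: "ii \<in> idx N I"
      have ip: "ii p < I p" using ii p by (auto simp: idx_def)
      have "(\<Prod>m<N. X m (ii m) (j m)) = X m' (ii m') (j m') * (\<Prod>m\<in>{..<N}-{m'}. X m (ii m) (j m))" if "m' = p" for m'
        using p that by (simp add: prod.remove)
      hence "(\<Prod>m<N. X m (ii m) (j m)) = X p (ii p) s * (\<Prod>m\<in>{..<N}-{p}. X m (ii m) r)"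
        by (simp add: j_def)
      thus "T ii * (\<Prod>m<N. X m (ii m) (j m)) = (\<Sum>a<I p. if ii p = a then T ii * (X p a s * (\<Prod>m\<in>{..<N}-{p}. X m (ii m) r)) else 0)"
        using ip by (simp add: sum.delta)
    qed
    also have "\<dots> = (\<Sum>a<I p. X p a s * unf_prod N I T X p a r)"
      unfolding unf_prod_def
      by (subst sum.swap) (simp add: sum.inter_filter[OF finite_idx] sum_distrib_left mult_ac if_distrib cong: if_cong)
    also have "\<dots> = (\<Sum>a<I p. Xm p $$ (a,s) * U p $$ (a,r))"
      using Ue[OF p _ r] Xe s by simp
    also have "\<dots> = (transpose_mat (Xm p) * U p) $$ (s,r)"
      using Xc[of p] Uc[OF p] s r by (simp add: scalar_prod_def atLeast0LessThan)
    also have "transpose_mat (Xm p) * U p = (transpose_mat (Xm p) * Xm p) * H p"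
      unfolding U_def using assoc_mult_mat[of "transpose_mat (Xm p)" R "I p" "Xm p" R "H p" R] Xc[of p] Hc[OF p] by simp
    also have "\<dots> = 1\<^sub>m R" using gf[OF p] by simp
    finally show "Zten N I T X (\<lambda>m. if m = p then s else if m < N then r else 0) = (if r = s then 1 else 0)"
      using r s by (auto simp: j_def)
  next
    have Ue: "\<And>n a r. n < N \<Longrightarrow> a < I n \<Longrightarrow> r < R \<Longrightarrow> unf_prod N I T X n a r = U n $$ (a,r)"
      using crit c by auto
    fix i assume i: "i < N"
    have XT: "transpose_mat (Xm i) \<in> carrier_mat R (I i)" using Xc[of i] by simp
    have "Xm i * pinv (Xm i) = U i * transpose_mat (Xm i)"
      using gf[OF i] assoc_mult_mat[OF Xc Hc[OF i] XT] by (simp add: U_def)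
    moreover have "mat (I i) (I i) (\<lambda>(a, b). TY N I R T X i a b) = U i * transpose_mat (Xm i)"
    proof (rule eq_matI)
      fix a b assume a: "a < dim_row (U i * transpose_mat (Xm i))" and b: "b < dim_col (U i * transpose_mat (Xm i))"
      hence a: "a < I i" and b: "b < I i" using Uc[OF i] XT by auto
      have "TY N I R T X i a b = (\<Sum>ii\<in>{ii \<in> idx N I. ii i = a}. \<Sum>r<R. X i b r * (T ii * (\<Prod>m\<in>{..<N}-{i}. X m (ii m) r)))"
        unfolding TY_def Yten_def
      proof (rule sum.cong[OF refl])
        fix ii
        have "(\<Prod>m<N. X m ((ii(i := b)) m) r) = X i b r * (\<Prod>m\<in>{..<N}-{i}. X m (ii m) r)" for r
        proof -
          have "(\<Prod>m<N. X m ((ii(i := b)) m) r) = X i ((ii(i := b)) i) r * (\<Prod>m\<in>{..<N}-{i}. X m ((ii(i := b)) m) r)"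
            using i by (simp add: prod.remove)
          also have "(\<Prod>m\<in>{..<N}-{i}. X m ((ii(i := b)) m) r) = (\<Prod>m\<in>{..<N}-{i}. X m (ii m) r)"
            by (rule prod.cong) auto
          finally show ?thesis by simp
        qed
        thus "T ii * (\<Sum>r<R. \<Prod>m<N. X m ((ii(i := b)) m) r) = (\<Sum>r<R. X i b r * (T ii * (\<Prod>m\<in>{..<N}-{i}. X m (ii m) r)))"
          by (simp add: sum_distrib_left mult_ac)
      qed
      also have "\<dots> = (\<Sum>r<R. X i b r * unf_prod N I T X i a r)"
        unfolding unf_prod_def by (subst sum.swap) (simp add: sum_distrib_left)
      also have "\<dots> = (\<Sum>r<R. U i $$ (a,r) * Xm i $$ (b,r))"
        using Ue[OF i a] Xe[OF b] by (simp add: mult_ac)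
      also have "\<dots> = (U i * transpose_mat (Xm i)) $$ (a,b)"
        using Uc[OF i] Xc[of i] a b by (simp add: scalar_prod_def atLeast0LessThan)
      finally show "mat (I i) (I i) (\<lambda>(a, b). TY N I R T X i a b) $$ (a,b) = (U i * transpose_mat (Xm i)) $$ (a,b)"
        using a b by simp
    qed (use Uc[OF i] XT in auto)
    ultimately show "mat (I i) (I i) (\<lambda>(a, b). TY N I R T X i a b) = Xmat I R X i * pinv (Xmat I R X i)"
      by (simp add: Xm_def)
  qed
  show ?thesis using part0 rest by blast
qed


end
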